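(* Let $A,B\in\mathfrak{J}_n$ be nonempty with $B\subset A$, let $x^*\in\mathbb{R}$, and suppose $\mu(\Omega_{A,B,x^*})=0$. Then the function $h(x)=\mu\big(xA\,\widetilde\oplus\,(1-x)B\big)$, $x\in\mathbb{R}$, is continuous at $x^*$.
   Context: $\mu$ is $n$-dimensional Lebesgue measure. $\operatorname{ci}(A)$ is the closure of the interior of $A$. $\mathfrak{J}_n$ is the family of bounded sets $A\subset\mathbb{R}^n$ with $A=\operatorname{ci}(A)$ and $\mu(\partial A)=0$. For nonempty bounded $A$, $d_S(p,A)=d(p,\partial A)$ if $p\in A$ and $d_S(p,A)=-d(p,\partial A)$ if $p\notin A$, with $d(q,E)=\min_{e\in E}\|q-e\|$. For nonempty $A,B\in\mathfrak{J}_n$, $x\in\mathbb{R}$: $f_{A,B,x}(p)=x\,d_S(p,A)+(1-x)\,d_S(p,B)$, the distance average is $xA\,\widetilde\oplus\,(1-x)B=\{p: f_{A,B,x}(p)\ge0\}$, and $\Omega_{A,B,x}=\{p: f_{A,B,x}(p)=0\}$. *)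

theory Defs
  imports "HOL-Analysis.Analysis"
begin

definition J_class :: "'a::euclidean_space set set" where
  "J_class = {A. bounded A \<and> closure (interior A) = A \<and> frontier A \<in> null_sets lebesgue}"

definition signed_dist :: "'a::euclidean_space \<Rightarrow> 'a set \<Rightarrow> real" where
  "signed_dist p A = (if p \<in> A then infdist p (frontier A) else - infdist p (frontier A))"

definition f_avg :: "'a::euclidean_space set \<Rightarrow> 'a set \<Rightarrow> real \<Rightarrow> 'a \<Rightarrow> real" where
  "f_avg A B x p = x * signed_dist p A + (1 - x) * signed_dist p B"

definition dist_avg :: "'a::euclidean_space set \<Rightarrow> 'a set \<Rightarrow> real \<Rightarrow> 'a set" where
  "dist_avg A B x = {p. f_avg A B x p \<ge> 0}"

definition Omega_set :: "'a::euclidean_space set \<Rightarrow> 'a set \<Rightarrow> real \<Rightarrow> 'a set" where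
  "Omega_set A B x = {p. f_avg A B x p = 0}"

end

theory Submission
  imports Defs
begin

lemma sd_meas: "closed A \<Longrightarrow> (\<lambda>p. signed_dist p (A::'a::euclidean_space set)) \<in> borel_measurable borel"
  unfolding signed_dist_def
  apply (rule measurable_If_set)
  apply (auto intro!: borel_measurable_continuous_onI continuous_intros)
  done

lemma sd_meas_leb: "closed A \<Longrightarrow> (\<lambda>p. signed_dist p (A::'a::euclidean_space set)) \<in> borel_measurable lebesgue"
  apply (rule measurable_completion)
  apply (subst measurable_lborel2)
  by (erule sd_meas)

lemma infdist_lb:
  fixes S :: "'a::euclidean_space set"
  assumes "S \<noteq> {}" "S \<subseteq> cball 0 R"
  shows "norm p - R \<le> infdist p S"
proof -
  have "\<And>s. s \<in> S \<Longrightarrow> norm p - R \<le> dist p s"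
  proof -
    fix s assume "s \<in> S"
    then have "norm s \<le> R" using assms(2) by auto
    moreover have "norm p \<le> norm s + dist p s"
      by (metis dist_norm norm_triangle_sub add.commute)
    ultimately show "norm p - R \<le> dist p s" by linarith
  qed
  then show ?thesis using assms(1) unfolding infdist_notempty[OF assms(1)]
    by (intro cINF_greatest) auto
qed

lemma infdist_ub:
  fixes S :: "'a::euclidean_space set"
  assumes "S \<noteq> {}" "S \<subseteq> cball 0 R"
  shows "infdist p S \<le> norm p + R"
proof -
  obtain s where s: "s \<in> S" using assms(1) by auto
  then have "norm s \<le> R" using assms(2) by auto
  moreover have "dist p s \<le> norm p + norm s"
    by (simp add: dist_norm norm_triangle_ineq4)
  ultimately show ?thesis using infdist_le[OF s, of p] by linarith
qed

lemma neg_far: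
  fixes A B :: "'a::euclidean_space set"
  assumes "frontier A \<noteq> {}" "frontier B \<noteq> {}" "A \<subseteq> cball 0 R" "B \<subseteq> cball 0 R"
    "frontier A \<subseteq> A" "frontier B \<subseteq> B" "\<bar>x\<bar> \<le> M" "R \<ge> 0"
    "norm p > R + 2 * M * R"
  shows "f_avg A B x p < 0"
proof -
  have M: "M \<ge> 0" using assms(7) by linarith
  have "2 * M * R \<ge> 0" using M assms(8) by simp
  then have pA: "p \<notin> A" "p \<notin> B" using assms(3,4,9) by auto
  define a where "a = infdist p (frontier A)"
  define b where "b = infdist p (frontier B)"
  have fa: "f_avg A B x p = - (b + x * (a - b))"
    using pA by (simp add: f_avg_def signed_dist_def a_def b_def algebra_simps)
  have a1: "norm p - R \<le> a" "a \<le> norm p + R"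
    unfolding a_def using infdist_lb[OF assms(1) order_trans[OF assms(5,3)]]
      infdist_ub[OF assms(1) order_trans[OF assms(5,3)]] by auto
  have b1: "norm p - R \<le> b" "b \<le> norm p + R"
    unfolding b_def using infdist_lb[OF assms(2) order_trans[OF assms(6,4)]]
      infdist_ub[OF assms(2) order_trans[OF assms(6,4)]] by auto
  have "\<bar>a - b\<bar> \<le> 2 * R" using a1 b1 by linarith
  then have "\<bar>x * (a - b)\<bar> \<le> M * (2 * R)"
    unfolding abs_mult using assms(7) by (intro mult_mono) auto
  then have "x * (a - b) \<ge> - (2 * M * R)" by linarith
  then show ?thesis using fa b1 assms(9) by linarith
qed

theorem mainTheorem4:
  fixes A B :: "'a::euclidean_space set" and xs :: real
  assumes "A \<in> J_class" and "B \<in> J_class"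
    and "A \<noteq> {}" and "B \<noteq> {}"
    and "B \<subseteq> A"
    and "Omega_set A B xs \<in> null_sets lebesgue"
  shows "isCont (\<lambda>x. measure lebesgue (dist_avg A B x)) xs"
proof -
  have clA: "closed A" using assms(1) unfolding J_class_def by (metis (mono_tags) closed_closure mem_Collect_eq)
  have clB: "closed B" using assms(2) unfolding J_class_def by (metis (mono_tags) closed_closure mem_Collect_eq)
  have bA: "bounded A" using assms(1) unfolding J_class_def by auto
  have bB: "bounded B" using assms(2) unfolding J_class_def by auto
  obtain R where R0: "R > 0" and RA: "A \<union> B \<subseteq> cball 0 R"
  proof -
    have "bounded (A \<union> B)" using bA bB by simp
    then obtain b where "b > 0" "\<forall>x\<in>A \<union> B. norm x \<le> b" unfolding bounded_pos by blast
    then show ?thesis using that[of b] by (auto simp: subset_iff)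
  qed
  have fA: "frontier A \<noteq> {}" using frontier_not_empty[of A] assms(3) bA not_bounded_UNIV by metis
  have fB: "frontier B \<noteq> {}" using frontier_not_empty[of B] assms(4) bB not_bounded_UNIV by metis
  have frA: "frontier A \<subseteq> A" using clA by (simp add: frontier_subset_closed)
  have frB: "frontier B \<subseteq> B" using clB by (simp add: frontier_subset_closed)
  have meas: "f_avg A B x \<in> borel_measurable lebesgue" for x
  proof -
    have "(\<lambda>p. x * signed_dist p A + (1 - x) * signed_dist p B) \<in> borel_measurable lebesgue"
      using sd_meas_leb[OF clA] sd_meas_leb[OF clB] by measurable
    then show ?thesis by (simp add: f_avg_def[abs_def])
  qed
  have setsD: "dist_avg A B x \<in> sets lebesgue" for x
  proof -
    have "dist_avg A B x = f_avg A B x -` {0..} \<inter> space lebesgue"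
      by (auto simp: dist_avg_def)
    then show ?thesis using measurable_sets[OF meas[of x], of "{0..}"] by simp
  qed
  define M where "M = \<bar>xs\<bar> + 1"
  define \<rho> where "\<rho> = R + 2 * M * R"
  have bound: "dist_avg A B x \<subseteq> cball 0 \<rho>" if "\<bar>x - xs\<bar> \<le> 1" for x
  proof
    fix p assume p: "p \<in> dist_avg A B x"
    show "p \<in> cball 0 \<rho>"
    proof (rule ccontr)
      assume "p \<notin> cball 0 \<rho>"
      then have "norm p > R + 2 * M * R" by (simp add: \<rho>_def)
      moreover have "\<bar>x\<bar> \<le> M" using that by (simp add: M_def)
      ultimately have "f_avg A B x p < 0"
        using neg_far[OF fA fB _ _ frA frB, of R x M p] RA R0 by simp
      then show False using p by (simp add: dist_avg_def)
    qed
  qed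
  have intw: "integrable lebesgue (indicator (cball (0::'a) \<rho>) :: 'a \<Rightarrow> real)"
    using lmeasurable_cball lmeasurable_iff_integrable by blast
  show ?thesis
  proof (rule continuous_at_sequentiallyI)
    fix u :: "nat \<Rightarrow> real" assume u: "u \<longlonglongrightarrow> xs"
    then have "eventually (\<lambda>n. dist (u n) xs < 1) sequentially"
      by (rule tendstoD) simp
    then obtain N where N: "\<And>n. n \<ge> N \<Longrightarrow> \<bar>u n - xs\<bar> \<le> 1"
      unfolding eventually_sequentially dist_real_def by (metis less_imp_le)
    have u': "(\<lambda>n. u (n + N)) \<longlonglongrightarrow> xs" using u by (rule LIMSEQ_ignore_initial_segment)
    have "(\<lambda>n. integral\<^sup>L lebesgue (indicator (dist_avg A B (u (n + N))) :: 'a \<Rightarrow> real))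
          \<longlonglongrightarrow> integral\<^sup>L lebesgue (indicator (dist_avg A B xs))"
    proof (rule integral_dominated_convergence[where w="indicator (cball 0 \<rho>)"])
      show "indicator (dist_avg A B xs) \<in> borel_measurable lebesgue"
        using setsD by simp
      show "\<And>i. indicator (dist_avg A B (u (i + N))) \<in> borel_measurable lebesgue"
        using setsD by simp
      show "integrable lebesgue (indicator (cball 0 \<rho>) :: 'a \<Rightarrow> real)" by (rule intw)
      show "AE x in lebesgue. norm (indicator (dist_avg A B (u (i + N))) x :: real) \<le> indicator (cball 0 \<rho>) x" for i
      proof (rule AE_I2)
        fix p
        have "dist_avg A B (u (i + N)) \<subseteq> cball 0 \<rho>" using bound N[of "i + N"] by simp
        then show "norm (indicator (dist_avg A B (u (i + N))) p :: real) \<le> indicator (cball 0 \<rho>) p"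
          by (auto simp: indicator_def)
      qed
      show "AE p in lebesgue. (\<lambda>i. indicator (dist_avg A B (u (i + N))) p :: real) \<longlonglongrightarrow> indicator (dist_avg A B xs) p"
      proof (rule AE_I'[OF assms(6)])
        show "{p \<in> space lebesgue. \<not> (\<lambda>i. indicator (dist_avg A B (u (i + N))) p :: real) \<longlonglongrightarrow> indicator (dist_avg A B xs) p} \<subseteq> Omega_set A B xs"
        proof (safe)
          fix p assume nc: "\<not> (\<lambda>i. indicator (dist_avg A B (u (i + N))) p :: real) \<longlonglongrightarrow> indicator (dist_avg A B xs) p"
          have lim: "(\<lambda>i. f_avg A B (u (i + N)) p) \<longlonglongrightarrow> f_avg A B xs p"
            unfolding f_avg_def by (intro tendsto_intros u')
          show "p \<in> Omega_set A B xs"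
          proof (rule ccontr)
            assume "p \<notin> Omega_set A B xs"
            then have ne: "f_avg A B xs p \<noteq> 0" by (simp add: Omega_set_def)
            show False
            proof (cases "f_avg A B xs p > 0")
              case True
              have "eventually (\<lambda>i. 0 < f_avg A B (u (i + N)) p) sequentially"
                using order_tendstoD(1)[OF lim True] .
              then have "eventually (\<lambda>i. (indicator (dist_avg A B (u (i + N))) p :: real) = indicator (dist_avg A B xs) p) sequentially"
                by (rule eventually_mono) (use True in \<open>simp add: dist_avg_def indicator_def\<close>)
              then have "(\<lambda>i. indicator (dist_avg A B (u (i + N))) p :: real) \<longlonglongrightarrow> indicator (dist_avg A B xs) p"
                by (rule tendsto_eventually)
              with nc show False by contradiction
            next
              case False
              then have F: "f_avg A B xs p < 0" using ne by linarith
              have "eventually (\<lambda>i. f_avg A B (u (i + N)) p < 0) sequentially"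
                using order_tendstoD(2)[OF lim F] .
              then have "eventually (\<lambda>i. (indicator (dist_avg A B (u (i + N))) p :: real) = indicator (dist_avg A B xs) p) sequentially"
                by (rule eventually_mono) (use F in \<open>simp add: dist_avg_def indicator_def\<close>)
              then have "(\<lambda>i. indicator (dist_avg A B (u (i + N))) p :: real) \<longlonglongrightarrow> indicator (dist_avg A B xs) p"
                by (rule tendsto_eventually)
              with nc show False by contradiction
            qed
          qed
        qed
      qed
    qed
    then have "(\<lambda>n. measure lebesgue (dist_avg A B (u (n + N)))) \<longlonglongrightarrow> measure lebesgue (dist_avg A B xs)"
      by simp
    then show "(\<lambda>n. measure lebesgue (dist_avg A B (u n))) \<longlonglongrightarrow> measure lebesgue (dist_avg A B xs)"
      by (rule LIMSEQ_offset)
  qed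
qed

end
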